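(* Let $n\ge 3$. Consider the $n^2$-puzzle: the $n\times n$ grid graph with $n^2$ distinct robots, one occupying each vertex. Then any two states of the $n^2$-puzzle are connected via legal moves, i.e., from any assignment of the robots to the vertices one can reach any other such assignment by a finite sequence of legal moves.
   Context: A state is a bijection between the set of robots and the vertex set of the grid. A legal move (one time step) takes a state to another state such that each robot either stays at its vertex or moves to an adjacent vertex, no two robots end at the same vertex, and no two robots traverse the same edge in opposite directions (swap). Several robots may move simultaneously; since every vertex is occupied, the moving robots move synchronously along one or more vertex-disjoint cycles of the grid. *)

theory Defs
  imports Main
begin

definition grid :: "nat \<Rightarrow> (nat \<times> nat) set" where
  "grid n = {0..<n} \<times> {0..<n}"

definition grid_adj :: "nat \<times> nat \<Rightarrow> nat \<times> nat \<Rightarrow> bool" where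
  "grid_adj u v \<longleftrightarrow>
     (fst u = fst v \<and> (snd u = Suc (snd v) \<or> snd v = Suc (snd u))) \<or>
     (snd u = snd v \<and> (fst u = Suc (fst v) \<or> fst v = Suc (fst u)))"

definition is_state :: "nat \<Rightarrow> ('r \<Rightarrow> nat \<times> nat) \<Rightarrow> bool" where
  "is_state n s \<longleftrightarrow> bij_betw s UNIV (grid n)"

text \<open>One legal time step from state s to state s': every robot stays or moves to an
  adjacent vertex, no two robots end at the same vertex (s' is a state, hence injective),
  and no two robots swap along an edge.\<close>
definition legal_move :: "nat \<Rightarrow> ('r \<Rightarrow> nat \<times> nat) \<Rightarrow> ('r \<Rightarrow> nat \<times> nat) \<Rightarrow> bool" where
  "legal_move n s s' \<longleftrightarrow>
     is_state n s \<and> is_state n s' \<and>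
     (\<forall>r. s' r = s r \<or> grid_adj (s r) (s' r)) \<and>
     (\<forall>r1 r2. r1 \<noteq> r2 \<and> s' r1 = s r2 \<longrightarrow> s' r2 \<noteq> s r1)"

end

theory Submission
  imports Defs "HOL-Combinatorics.Permutations"
begin

type_synonym vx = "nat \<times> nat"

lemma grid_adj_sym: "grid_adj u v \<Longrightarrow> grid_adj v u"
  unfolding grid_adj_def by auto

lemma grid_adj_neq: "grid_adj u v \<Longrightarrow> u \<noteq> v"
  unfolding grid_adj_def by auto

lemma state_in: "is_state n s \<Longrightarrow> s r \<in> grid n"
  unfolding is_state_def bij_betw_def by auto

lemma perm_move:
  assumes st: "is_state n s" and bij: "bij_betw p (grid n) (grid n)"
    and adj: "\<forall>v\<in>grid n. p v = v \<or> grid_adj v (p v)"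
    and nsw: "\<forall>v\<in>grid n. p v \<noteq> v \<longrightarrow> p (p v) \<noteq> v"
  shows "legal_move n s (p \<circ> s)"
proof -
  have st2: "is_state n (p \<circ> s)"
    using st bij unfolding is_state_def by (rule bij_betw_trans)
  have inj: "inj s" using st unfolding is_state_def bij_betw_def by auto
  show ?thesis
    unfolding legal_move_def
  proof (intro conjI allI impI)
    fix r show "(p \<circ> s) r = s r \<or> grid_adj (s r) ((p \<circ> s) r)"
      using adj state_in[OF st] by auto
  next
    fix r1 r2 assume h: "r1 \<noteq> r2 \<and> (p \<circ> s) r1 = s r2"
    hence ne: "s r1 \<noteq> s r2" using inj by (auto dest: injD)
    have "p (s r1) \<noteq> s r1" using h ne by auto
    hence "p (p (s r1)) \<noteq> s r1" using nsw state_in[OF st] by auto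
    thus "(p \<circ> s) r2 \<noteq> s r1" using h by auto
  qed (use st st2 in auto)
qed

definition c4 :: "vx \<Rightarrow> vx \<Rightarrow> vx \<Rightarrow> vx \<Rightarrow> vx \<Rightarrow> vx" where
  "c4 a b c d v = (if v = a then b else if v = b then c else if v = c then d else if v = d then a else v)"

definition c6 :: "vx \<Rightarrow> vx \<Rightarrow> vx \<Rightarrow> vx \<Rightarrow> vx \<Rightarrow> vx \<Rightarrow> vx \<Rightarrow> vx" where
  "c6 a b c d e f v = (if v = a then b else if v = b then c else if v = c then d else
     if v = d then e else if v = e then f else if v = f then a else v)"

lemma c4_move:
  assumes st: "is_state n s" and dist: "distinct [a,b,c,d]"
    and g: "a \<in> grid n" "b \<in> grid n" "c \<in> grid n" "d \<in> grid n"
    and adj: "grid_adj a b" "grid_adj b c" "grid_adj c d" "grid_adj d a"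
  shows "legal_move n s (c4 a b c d \<circ> s)"
proof (rule perm_move[OF st])
  show "bij_betw (c4 a b c d) (grid n) (grid n)"
    by (rule bij_betw_byWitness[where f'="c4 d c b a"]) (use dist g in \<open>auto simp: c4_def\<close>)
  show "\<forall>v\<in>grid n. c4 a b c d v = v \<or> grid_adj v (c4 a b c d v)"
    using adj by (auto simp: c4_def)
  show "\<forall>v\<in>grid n. c4 a b c d v \<noteq> v \<longrightarrow> c4 a b c d (c4 a b c d v) \<noteq> v"
    using dist by (auto simp: c4_def)
qed

lemma c6_move:
  assumes st: "is_state n s" and dist: "distinct [a,b,c,d,e,f]"
    and g: "a \<in> grid n" "b \<in> grid n" "c \<in> grid n" "d \<in> grid n" "e \<in> grid n" "f \<in> grid n"
    and adj: "grid_adj a b" "grid_adj b c" "grid_adj c d" "grid_adj d e" "grid_adj e f" "grid_adj f a"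
  shows "legal_move n s (c6 a b c d e f \<circ> s)"
proof (rule perm_move[OF st])
  show "bij_betw (c6 a b c d e f) (grid n) (grid n)"
    by (rule bij_betw_byWitness[where f'="c6 f e d c b a"]) (use dist g in \<open>auto simp: c6_def\<close>)
  show "\<forall>v\<in>grid n. c6 a b c d e f v = v \<or> grid_adj v (c6 a b c d e f v)"
    using adj by (auto simp: c6_def)
  show "\<forall>v\<in>grid n. c6 a b c d e f v \<noteq> v \<longrightarrow> c6 a b c d e f (c6 a b c d e f v) \<noteq> v"
    using dist by (auto simp: c6_def)
qed

lemma move_state: "legal_move n s s' \<Longrightarrow> is_state n s'"
  unfolding legal_move_def by auto

lemma six:
  fixes s :: "'r \<Rightarrow> vx"
  assumes st: "is_state n s" and dist: "distinct [a,b,c,d,e,f]"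
    and g: "a \<in> grid n" "b \<in> grid n" "c \<in> grid n" "d \<in> grid n" "e \<in> grid n" "f \<in> grid n"
    and adj: "grid_adj a b" "grid_adj b c" "grid_adj d e" "grid_adj e f"
      "grid_adj a d" "grid_adj b e" "grid_adj c f"
  shows "(legal_move n)\<^sup>*\<^sup>* s (transpose a b \<circ> s)"
    "(legal_move n)\<^sup>*\<^sup>* s (transpose a d \<circ> s)"
    "(legal_move n)\<^sup>*\<^sup>* s (transpose b e \<circ> s)"
proof -
  note adj' = adj grid_adj_sym[OF adj(1)] grid_adj_sym[OF adj(2)] grid_adj_sym[OF adj(3)]
    grid_adj_sym[OF adj(4)] grid_adj_sym[OF adj(5)] grid_adj_sym[OF adj(6)] grid_adj_sym[OF adj(7)]
  have neq: "a \<noteq> b" "a \<noteq> c" "a \<noteq> d" "a \<noteq> e" "a \<noteq> f" "b \<noteq> a" "b \<noteq> c" "b \<noteq> d" "b \<noteq> e" "b \<noteq> f" "c \<noteq> a" "c \<noteq> b" "c \<noteq> d" "c \<noteq> e" "c \<noteq> f" "d \<noteq> a" "d \<noteq> b" "d \<noteq> c" "d \<noteq> e" "d \<noteq> f" "e \<noteq> a" "e \<noteq> b" "e \<noteq> c" "e \<noteq> d" "e \<noteq> f" "f \<noteq> a" "f \<noteq> b" "f \<noteq> c" "f \<noteq> d" "f \<noteq> e" using dist by auto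
  define A where "A = c4 a b e d"
  define Ai where "Ai = c4 d e b a"
  define B where "B = c4 b c f e"
  define h where "h = c6 d e f c b a"
  have mA: "legal_move n x (A \<circ> x)" if "is_state n x" for x :: "'r \<Rightarrow> vx"
    unfolding A_def by (rule c4_move[OF that]) (use dist g adj' in auto)
  have mAi: "legal_move n x (Ai \<circ> x)" if "is_state n x" for x :: "'r \<Rightarrow> vx"
    unfolding Ai_def by (rule c4_move[OF that]) (use dist g adj' in auto)
  have mB: "legal_move n x (B \<circ> x)" if "is_state n x" for x :: "'r \<Rightarrow> vx"
    unfolding B_def by (rule c4_move[OF that]) (use dist g adj' in auto)
  have mh: "legal_move n x (h \<circ> x)" if "is_state n x" for x :: "'r \<Rightarrow> vx"
    unfolding h_def by (rule c6_move[OF that]) (use dist g adj' in auto)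
  have step: "(legal_move n)\<^sup>*\<^sup>* x (p \<circ> x)" if "is_state n x" "\<And>y::'r\<Rightarrow>vx. is_state n y \<Longrightarrow> legal_move n y (p \<circ> y)" for x :: "'r \<Rightarrow> vx" and p
    by (rule r_into_rtranclp) (rule that(2)[OF that(1)])
  have stm: "is_state n (p \<circ> x)" if "is_state n x" "\<And>y::'r\<Rightarrow>vx. is_state n y \<Longrightarrow> legal_move n y (p \<circ> y)" for x :: "'r \<Rightarrow> vx" and p
    using that move_state by blast
  have e1: "h \<circ> B \<circ> A = transpose a b" (is "?l = ?r")
    proof (rule ext)
    fix v
    have "v = a \<or> v = b \<or> v = c \<or> v = d \<or> v = e \<or> v = f \<or> v \<notin> {a,b,c,d,e,f}" by blast
    thus "?l v = ?r v"
      using neq by (elim disjE) (simp_all add: A_def Ai_def B_def h_def c4_def c6_def transpose_def)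
  qed
  have e2: "Ai \<circ> h \<circ> B \<circ> A \<circ> A = transpose a d" (is "?l = ?r")
    proof (rule ext)
    fix v
    have "v = a \<or> v = b \<or> v = c \<or> v = d \<or> v = e \<or> v = f \<or> v \<notin> {a,b,c,d,e,f}" by blast
    thus "?l v = ?r v"
      using neq by (elim disjE) (simp_all add: A_def Ai_def B_def h_def c4_def c6_def transpose_def)
  qed
  have e3: "B \<circ> h \<circ> A = transpose b e" (is "?l = ?r")
    proof (rule ext)
    fix v
    have "v = a \<or> v = b \<or> v = c \<or> v = d \<or> v = e \<or> v = f \<or> v \<notin> {a,b,c,d,e,f}" by blast
    thus "?l v = ?r v"
      using neq by (elim disjE) (simp_all add: A_def Ai_def B_def h_def c4_def c6_def transpose_def)
  qed
  have s1: "is_state n (A \<circ> s)" using stm[OF st mA] .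
  have s2: "is_state n (B \<circ> (A \<circ> s))" using stm[OF s1 mB] .
  have "(legal_move n)\<^sup>*\<^sup>* s (h \<circ> (B \<circ> (A \<circ> s)))"
    using step[OF st mA] step[OF s1 mB] step[OF s2 mh] by (meson rtranclp_trans)
  thus "(legal_move n)\<^sup>*\<^sup>* s (transpose a b \<circ> s)" by (simp add: e1[symmetric] comp_assoc)
  have s2': "is_state n (h \<circ> (A \<circ> s))" using stm[OF s1 mh] .
  have "(legal_move n)\<^sup>*\<^sup>* s (B \<circ> (h \<circ> (A \<circ> s)))"
    using step[OF st mA] step[OF s1 mh] step[OF s2' mB] by (meson rtranclp_trans)
  thus "(legal_move n)\<^sup>*\<^sup>* s (transpose b e \<circ> s)" by (simp add: e3[symmetric] comp_assoc)
  have t2: "is_state n (A \<circ> (A \<circ> s))" using stm[OF s1 mA] .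
  have t3: "is_state n (B \<circ> (A \<circ> (A \<circ> s)))" using stm[OF t2 mB] .
  have t4: "is_state n (h \<circ> (B \<circ> (A \<circ> (A \<circ> s))))" using stm[OF t3 mh] .
  have "(legal_move n)\<^sup>*\<^sup>* s (Ai \<circ> (h \<circ> (B \<circ> (A \<circ> (A \<circ> s)))))"
    using step[OF st mA] step[OF s1 mA] step[OF t2 mB] step[OF t3 mh] step[OF t4 mAi]
    by (meson rtranclp_trans)
  thus "(legal_move n)\<^sup>*\<^sup>* s (transpose a d \<circ> s)" by (simp add: e2[symmetric] comp_assoc)
qed

abbreviation RR where "RR n \<equiv> (legal_move n)\<^sup>*\<^sup>*"

lemma rect:
  fixes s :: "'r \<Rightarrow> vx"
  assumes st: "is_state n s" and rc: "r + 1 < n" "c + 2 < n"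
  shows "RR n s (transpose (r,c) (r,c+1) \<circ> s)"
    "RR n s (transpose (r,c+2) (r,c+1) \<circ> s)"
    "RR n s (transpose (r+1,c) (r+1,c+1) \<circ> s)"
    "RR n s (transpose (r+1,c+2) (r+1,c+1) \<circ> s)"
    "RR n s (transpose (r,c) (r+1,c) \<circ> s)"
    "RR n s (transpose (r,c+1) (r+1,c+1) \<circ> s)"
    "RR n s (transpose (r,c+2) (r+1,c+2) \<circ> s)"
proof -
  have g: "(r,c) \<in> grid n" "(r,c+1) \<in> grid n" "(r,c+2) \<in> grid n"
    "(r+1,c) \<in> grid n" "(r+1,c+1) \<in> grid n" "(r+1,c+2) \<in> grid n"
    using rc by (auto simp: grid_def)
  note S1 = six[OF st _ g(1,2,3,4,5,6)]
  note S2 = six[OF st _ g(3,2,1,6,5,4)]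
  note S3 = six[OF st _ g(4,5,6,1,2,3)]
  note S4 = six[OF st _ g(6,5,4,3,2,1)]
  show "RR n s (transpose (r,c) (r,c+1) \<circ> s)"
    by (rule S1(1)) (auto simp: grid_adj_def)
  show "RR n s (transpose (r,c) (r+1,c) \<circ> s)"
    by (rule S1(2)) (auto simp: grid_adj_def)
  show "RR n s (transpose (r,c+1) (r+1,c+1) \<circ> s)"
    by (rule S1(3)) (auto simp: grid_adj_def)
  show "RR n s (transpose (r,c+2) (r,c+1) \<circ> s)"
    by (rule S2(1)) (auto simp: grid_adj_def)
  show "RR n s (transpose (r,c+2) (r+1,c+2) \<circ> s)"
    by (rule S2(2)) (auto simp: grid_adj_def)
  show "RR n s (transpose (r+1,c) (r+1,c+1) \<circ> s)"
    by (rule S3(1)) (auto simp: grid_adj_def)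
  show "RR n s (transpose (r+1,c+2) (r+1,c+1) \<circ> s)"
    by (rule S4(1)) (auto simp: grid_adj_def)
qed

lemma hor:
  fixes s :: "'r \<Rightarrow> vx"
  assumes st: "is_state n s" and n: "n \<ge> 3" and g: "(i,j) \<in> grid n" "(i,j+1) \<in> grid n"
  shows "RR n s (transpose (i,j) (i,j+1) \<circ> s)"
proof -
  have i: "i < n" and j: "j + 1 < n" using g by (auto simp: grid_def)
  show ?thesis
  proof (cases "i + 1 < n")
    case True
    show ?thesis
    proof (cases "j + 2 < n")
      case True
      thus ?thesis using rect(1)[OF st \<open>i+1<n\<close> True] by simp
    next
      case False
      then obtain k where k: "j = Suc k" using j n by (cases j) auto
      have "k + 2 < n" using j k by simp
      from rect(2)[OF st \<open>i+1<n\<close> this] show ?thesis using k by (simp add: transpose_commute)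
    qed
  next
    case False
    then obtain r where r: "i = Suc r" using i n by (cases i) auto
    have r1: "r + 1 < n" using i r by simp
    show ?thesis
    proof (cases "j + 2 < n")
      case True
      thus ?thesis using rect(3)[OF st r1 True] r by simp
    next
      case False
      then obtain k where k: "j = Suc k" using j n by (cases j) auto
      have "k + 2 < n" using j k by simp
      from rect(4)[OF st r1 this] show ?thesis using k r by (simp add: transpose_commute)
    qed
  qed
qed

lemma ver:
  fixes s :: "'r \<Rightarrow> vx"
  assumes st: "is_state n s" and n: "n \<ge> 3" and g: "(i,j) \<in> grid n" "(i+1,j) \<in> grid n"
  shows "RR n s (transpose (i,j) (i+1,j) \<circ> s)"
proof -
  have i: "i + 1 < n" and j: "j < n" using g by (auto simp: grid_def)
  show ?thesis
  proof (cases "j + 2 < n")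
    case True
    thus ?thesis using rect(5)[OF st i True] by simp
  next
    case False
    show ?thesis
    proof (cases "j + 2 = n")
      case True
      then obtain k where k: "j = Suc k" using j n by (cases j) auto
      have "k + 2 < n" using True k by simp
      from rect(6)[OF st i this] show ?thesis using k by simp
    next
      case False
      hence "j + 1 = n" using j \<open>\<not> j + 2 < n\<close> by simp
      define k where "k = j - 2"
      have k: "j = k + 2" using \<open>j + 1 = n\<close> n by (simp add: k_def)
      have "k + 2 < n" using \<open>j + 1 = n\<close> k by simp
      from rect(7)[OF st i this] show ?thesis using k by simp
    qed
  qed
qed

lemma adj_swap:
  fixes s :: "'r \<Rightarrow> vx"
  assumes st: "is_state n s" and n: "n \<ge> 3" and g: "u \<in> grid n" "v \<in> grid n"
    and a: "grid_adj u v"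
  shows "RR n s (transpose u v \<circ> s)"
proof -
  obtain i1 j1 i2 j2 where u: "u = (i1,j1)" and v: "v = (i2,j2)" by (cases u, cases v) auto
  from a consider "i1 = i2" "j1 = Suc j2" | "i1 = i2" "j2 = Suc j1"
    | "j1 = j2" "i1 = Suc i2" | "j1 = j2" "i2 = Suc i1"
    unfolding grid_adj_def u v by auto
  thus ?thesis
  proof cases
    case 1 thus ?thesis using hor[OF st n, of i2 j2] g u v by (simp add: transpose_commute)
  next
    case 2 thus ?thesis using hor[OF st n, of i1 j1] g u v by simp
  next
    case 3 thus ?thesis using ver[OF st n, of i2 j2] g u v by (simp add: transpose_commute)
  next
    case 4 thus ?thesis using ver[OF st n, of i1 j1] g u v by simp
  qed
qed

lemma st_tr:
  assumes "is_state n s" "u \<in> grid n" "v \<in> grid n"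
  shows "is_state n (transpose u v \<circ> s)"
  using assms unfolding is_state_def
  by (meson bij_betw_trans permutes_imp_bij permutes_swap_id)

lemma conj_tr:
  fixes u v w :: vx
  assumes "u \<noteq> v" "u \<noteq> w" "v \<noteq> w"
  shows "transpose u v = transpose u w \<circ> transpose w v \<circ> transpose u w"
proof (rule ext)
  fix x
  have "x = u \<or> x = v \<or> x = w \<or> x \<notin> {u,v,w}" by blast
  thus "transpose u v x = (transpose u w \<circ> transpose w v \<circ> transpose u w) x"
    using assms by (elim disjE) (auto simp: transpose_def)
qed

lemma comb:
  assumes d: "u \<noteq> v" "u \<noteq> w" "v \<noteq> w" and g: "u \<in> grid n" "v \<in> grid n" "w \<in> grid n"
    and h1: "\<forall>s::'r \<Rightarrow> vx. is_state n s \<longrightarrow> RR n s (transpose u w \<circ> s)"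
    and h2: "\<forall>s::'r \<Rightarrow> vx. is_state n s \<longrightarrow> RR n s (transpose w v \<circ> s)"
  shows "\<forall>s::'r \<Rightarrow> vx. is_state n s \<longrightarrow> RR n s (transpose u v \<circ> s)"
proof (intro allI impI)
  fix s :: "'r \<Rightarrow> vx" assume st: "is_state n s"
  have s1: "is_state n (transpose u w \<circ> s)" using st_tr[OF st g(1,3)] .
  have s2: "is_state n (transpose w v \<circ> (transpose u w \<circ> s))" using st_tr[OF s1 g(3,2)] .
  have "RR n s (transpose u w \<circ> (transpose w v \<circ> (transpose u w \<circ> s)))"
    using h1 h2 st s1 s2 by (meson rtranclp_trans)
  thus "RR n s (transpose u v \<circ> s)" using conj_tr[OF d] by (simp add: comp_assoc)
qed

lemma origin:
  assumes n: "n \<ge> 3"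
  shows "(i,j) \<in> grid n \<Longrightarrow> (i,j) \<noteq> (0,0) \<Longrightarrow>
    \<forall>s::'r \<Rightarrow> vx. is_state n s \<longrightarrow> RR n s (transpose (0,0) (i,j) \<circ> s)"
proof (induction "i+j" arbitrary: i j rule: less_induct)
  case less
  have g0: "(0,0) \<in> grid n" using n by (auto simp: grid_def)
  obtain w where w: "w \<in> grid n" "grid_adj w (i,j)" "fst w + snd w < i + j"
  proof (cases "j > 0")
    case True
    show ?thesis by (rule that[of "(i, j-1)"]) (use less.prems True in \<open>auto simp: grid_def grid_adj_def\<close>)
  next
    case False
    hence "i > 0" using less.prems by auto
    show ?thesis by (rule that[of "(i-1, j)"]) (use less.prems \<open>i>0\<close> in \<open>auto simp: grid_def grid_adj_def\<close>)
  qed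
  have A: "\<forall>s::'r \<Rightarrow> vx. is_state n s \<longrightarrow> RR n s (transpose w (i,j) \<circ> s)"
    using adj_swap[OF _ n w(1) less.prems(1) w(2)] by blast
  show ?case
  proof (cases "w = (0,0)")
    case True thus ?thesis using A by simp
  next
    case False
    obtain a b where ab: "w = (a,b)" by (cases w)
    have "\<forall>s::'r \<Rightarrow> vx. is_state n s \<longrightarrow> RR n s (transpose (0,0) w \<circ> s)"
      using less.hyps[of a b] w ab False by auto
    moreover have "w \<noteq> (i,j)" using grid_adj_neq[OF w(2)] .
    ultimately show ?thesis
      using comb[of "(0,0)" "(i,j)" w n] g0 less.prems w(1) A False by auto
  qed
qed

lemma any_swap:
  assumes n: "n \<ge> 3" and g: "u \<in> grid n" "v \<in> grid n"
  shows "\<forall>s::'r \<Rightarrow> vx. is_state n s \<longrightarrow> RR n s (transpose u v \<circ> s)"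
proof -
  have g0: "(0,0) \<in> grid n" using n by (auto simp: grid_def)
  have O: "\<forall>s::'r \<Rightarrow> vx. is_state n s \<longrightarrow> RR n s (transpose (0,0) x \<circ> s)"
    if "x \<in> grid n" for x
  proof (cases "x = (0,0)")
    case True thus ?thesis by simp
  next
    case False thus ?thesis using origin[OF n, of "fst x" "snd x"] that by auto
  qed
  show ?thesis
  proof (cases "u = v")
    case True thus ?thesis by simp
  next
    case False
    show ?thesis
    proof (cases "u = (0,0) \<or> v = (0,0)")
      case True
      thus ?thesis
      proof
        assume "u = (0,0)" thus ?thesis using O[OF g(2)] by simp
      next
        assume "v = (0,0)" thus ?thesis using O[OF g(1)] by (simp add: transpose_commute)
      qed
    next
      case F2: False
      have "\<forall>s::'r \<Rightarrow> vx. is_state n s \<longrightarrow> RR n s (transpose u (0,0) \<circ> s)"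
        using O[OF g(1)] by (simp add: transpose_commute)
      thus ?thesis using comb[OF False _ _ g g0] O[OF g(2)] F2 by auto
    qed
  qed
qed

theorem proposition4:
  fixes n :: nat and s t :: "'r::finite \<Rightarrow> nat \<times> nat"
  assumes "n \<ge> 3" and "card (UNIV :: 'r set) = n * n"
    and "is_state n s" and "is_state n t"
  shows "(legal_move n)\<^sup>*\<^sup>* s t"
proof -
  note n = assms(1) and st = assms(3) and tt = assms(4)
  define p where "p = (\<lambda>v. if v \<in> grid n then t (inv_into UNIV s v) else v)"
  have bs: "bij_betw s UNIV (grid n)" and bt: "bij_betw t UNIV (grid n)"
    using st tt by (auto simp: is_state_def)
  have "bij_betw (t \<circ> inv_into UNIV s) (grid n) (grid n)"
    using bij_betw_trans[OF bij_betw_inv_into[OF bs] bt] .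
  hence "bij_betw p (grid n) (grid n)"
    by (rule bij_betw_cong[THEN iffD1, rotated]) (simp add: p_def)
  hence pp: "p permutes grid n" by (rule bij_imp_permutes) (simp add: p_def)
  have inj: "inj s" using bs by (auto simp: bij_betw_def)
  have pt: "p \<circ> s = t"
    by (rule ext) (simp add: p_def state_in[OF st] inv_into_f_f[OF inj])
  have fin: "finite (grid n)" by (simp add: grid_def)
  have "RR n s (p \<circ> s)"
    using pp fin
  proof (induction p rule: permutes_induct)
    case id thus ?case by simp
  next
    case (swap a b p)
    have "is_state n (p \<circ> s)"
      using st permutes_imp_bij[OF swap.hyps(4)] unfolding is_state_def by (rule bij_betw_trans)
    hence "RR n (p \<circ> s) (transpose a b \<circ> (p \<circ> s))"
      using any_swap[OF n swap.hyps(1,2)] by blast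
    with swap.IH have "RR n s (transpose a b \<circ> (p \<circ> s))" by (rule rtranclp_trans)
    thus ?case by (simp add: comp_def)
  qed
  thus ?thesis using pt by simp
qed

end
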